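(* Let $d\ge1$ be an integer, $0<\lambda<1$, and define $v^*_0=1$ and $v^*_k=1-\sqrt[d]{1-\lambda v^*_{k-1}}$ for $k=1,2,\dots$. Then $v^*_k=\Theta((\lambda/d)^k)$ as $k\to\infty$, i.e. there exist constants $0<c\le C<\infty$ such that $c(\lambda/d)^k\le v^*_k\le C(\lambda/d)^k$ for all sufficiently large $k$. *)

theory Defs
  imports "HOL-Analysis.Analysis"
begin

fun vstar :: "nat \<Rightarrow> real \<Rightarrow> nat \<Rightarrow> real" where
  "vstar d lam 0 = 1"
| "vstar d lam (Suc k) = 1 - root d (1 - lam * vstar d lam k)"

end

theory Submission imports Defs begin
lemma pw: fixes a::real assumes "0\<le>a" "a\<le>1" shows "real n * (1-a) * a^n \<le> 1 - a^n"
proof (induction n)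
  case 0 then show ?case by simp
next
  case (Suc n)
  have h: "a^(Suc n) \<le> a^n" using assms by (simp add: mult_left_le_one_le)
  have "a^n \<ge> 0" using assms by simp
  have "real (Suc n) * (1-a) * a^(Suc n) = real n * (1-a) * a^(Suc n) + (1-a)*a^(Suc n)" by (simp add: algebra_simps)
  also have "\<dots> \<le> real n * (1-a) * a^n + (1-a)*a^n"
    using h assms by (intro add_mono mult_left_mono) auto
  also have "\<dots> \<le> 1 - a^n + (1-a)*a^n" using Suc by simp
  also have "\<dots> = 1 - a^Suc n" by (simp add: algebra_simps)
  finally show ?case .
qed

lemma rootle: assumes "d\<ge>1" "0\<le>y" "y\<le>1" shows "root d (1-y) \<le> 1 - y / real d"
proof -
  have d: "real d \<ge> 1" using assms by simp
  have y: "y / real d \<le> 1" using assms d by (simp add: divide_le_eq)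
  have "1 + real d * (- (y / real d)) \<le> (1 + - (y/real d))^d"
    using y assms d by (intro Bernoulli_inequality) (simp add: divide_le_eq)
  hence "1 - y \<le> (1 - y/real d)^d" using d by simp
  hence "root d (1-y) \<le> root d ((1 - y/real d)^d)" using assms by (simp)
  also have "\<dots> = 1 - y/real d" using y assms by (intro real_root_power_cancel) auto
  finally show ?thesis .
qed

lemma step: assumes "d\<ge>1" "0\<le>y" "y<1"
  shows "1 - root d (1-y) \<le> y / (real d * (1-y))" "1 - root d (1-y) \<le> y"
    "0 \<le> 1 - root d (1-y)" "1 - root d (1-y) \<le> 1"
proof -
  define a where "a = root d (1-y)"
  have a0: "0 \<le> a" using assms by (simp add: a_def)
  have a1: "a \<le> 1" using assms by (simp add: a_def)
  have ad: "a^d = 1 - y" using assms by (simp add: a_def real_root_pow_pos2)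
  have "real d * (1-a) * a^d \<le> 1 - a^d" by (rule pw[OF a0 a1])
  hence "(1-a) * (real d * (1-y)) \<le> y" using ad by (simp add: algebra_simps)
  moreover have "real d * (1-y) > 0" using assms by simp
  ultimately show "1 - root d (1-y) \<le> y / (real d * (1-y))" unfolding a_def[symmetric]
    by (simp add: pos_le_divide_eq)
  have "a^d \<le> a" using a0 a1 assms by (simp add: power_le_one_iff power_decreasing[of 1 d a, simplified])
  thus "1 - root d (1-y) \<le> y" using ad a_def by simp
  show "0 \<le> 1 - root d (1-y)" "1 - root d (1-y) \<le> 1" using a0 a1 a_def by auto
qed
lemma bounds:
  fixes d :: nat and lam :: real
  assumes d: "d \<ge> 1" and l0: "0 < lam" and l1: "lam < 1"
  shows "0 \<le> vstar d lam k \<and> vstar d lam k \<le> lam^k \<and> (lam/real d)^k \<le> vstar d lam k \<and>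
     vstar d lam k \<le> (lam/real d)^k * exp (lam * (1 - lam^k) / (1-lam)^2)"
proof (induction k)
  case 0 then show ?case by simp
next
  case (Suc k)
  define v where "v = vstar d lam k"
  have v0: "0 \<le> v" and vl: "v \<le> lam^k" and vlo: "(lam/real d)^k \<le> v"
    and vup: "v \<le> (lam/real d)^k * exp (lam * (1 - lam^k) / (1-lam)^2)" using Suc by (auto simp: v_def)
  have lk: "lam^k \<le> 1" using l0 l1 by (simp add: power_le_one)
  have y0: "0 \<le> lam * v" using l0 v0 by simp
  have yt: "lam * v \<le> lam^(Suc k)" using vl l0 by simp
  have tl: "lam^(Suc k) \<le> lam" using l0 l1 lk by (simp add: mult_left_le_one_le)
  have y1: "lam * v < 1" using yt tl l1 by linarith
  have e: "vstar d lam (Suc k) = 1 - root d (1 - lam * v)" by (simp add: v_def)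
  note st = step[OF d y0 y1]
  have "0 \<le> vstar d lam (Suc k)" using st e by simp
  moreover have "vstar d lam (Suc k) \<le> lam^Suc k" using st e yt by simp
  moreover have "(lam/real d)^Suc k \<le> vstar d lam (Suc k)"
  proof -
    have "root d (1 - lam * v) \<le> 1 - lam * v / real d" using rootle[OF d y0] y1 by simp
    hence "lam * v/real d \<le> vstar d lam (Suc k)" using e by simp
    moreover have "(lam/real d)^Suc k \<le> lam * v/real d"
      using vlo l0 d by (simp add: divide_right_mono mult_left_mono)
    ultimately show ?thesis by linarith
  qed
  moreover have "vstar d lam (Suc k) \<le> (lam/real d)^Suc k * exp (lam * (1 - lam^Suc k) / (1-lam)^2)"
  proof -
    define t where "t = lam^Suc k"
    define E where "E = exp (lam * (1 - lam^k) / (1-lam)^2)"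
    have t1: "t < 1" and t0: "0 \<le> t" and tlam: "t \<le> lam" using tl l1 l0 by (auto simp: t_def simp del: power_Suc)
    have "vstar d lam (Suc k) \<le> lam * v / (real d * (1 - lam * v))" using st e by simp
    also have "\<dots> = (lam/real d) * v * (1/(1-lam * v))" by (simp add: field_simps)
    also have "\<dots> \<le> (lam/real d) * ((lam/real d)^k * E) * (1/(1-t))"
    proof (intro mult_mono)
      show "1/(1-lam * v) \<le> 1/(1-t)" using yt t1 y1 by (simp add: t_def frac_le)
    qed (use vup l0 v0 y1 t1 in \<open>auto simp: E_def\<close>)
    also have "1/(1-t) \<le> exp (t/(1-lam))"
    proof -
      have "1/(1-t) = 1 + t/(1-t)" using t1 by (simp add: field_simps)
      also have "\<dots> \<le> exp (t/(1-t))" by (rule exp_ge_add_one_self)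
      also have "\<dots> \<le> exp (t/(1-lam))" using tlam t0 t1 l1
        by (simp add: frac_le)
      finally show ?thesis .
    qed
    hence "(lam/real d) * ((lam/real d)^k * E) * (1/(1-t)) \<le> (lam/real d) * ((lam/real d)^k * E) * exp (t/(1-lam))"
      using l0 by (intro mult_left_mono) (auto simp: E_def)
    also have "\<dots> = (lam/real d)^Suc k * exp (lam * (1 - lam^k) / (1-lam)^2 + t/(1-lam))"
      by (simp add: E_def exp_add)
    also have "lam * (1 - lam^k) / (1-lam)^2 + t/(1-lam) = lam * (1 - lam^Suc k) / (1-lam)^2"
    proof -
      have h: "1 - lam \<noteq> 0" using l1 by simp
      have "t/(1-lam) = t*(1-lam)/(1-lam)^2" using h by (simp add: power2_eq_square)
      hence "lam * (1 - lam^k) / (1-lam)^2 + t/(1-lam) = (lam * (1 - lam^k) + t*(1-lam))/(1-lam)^2"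
        by (simp add: add_divide_distrib)
      also have "lam * (1 - lam^k) + t*(1-lam) = lam * (1 - lam^Suc k)" by (simp add: t_def algebra_simps)
      finally show ?thesis .
    qed
    finally show ?thesis by simp
  qed
  ultimately show ?case by blast
qed

theorem theorem3p3:
  fixes d :: nat and lam :: real
  assumes "d \<ge> 1" and "0 < lam" and "lam < 1"
  shows "\<exists>c C. 0 < c \<and> c \<le> C \<and>
           (\<forall>\<^sub>F k in sequentially.
              c * (lam / real d) ^ k \<le> vstar d lam k \<and>
              vstar d lam k \<le> C * (lam / real d) ^ k)"
proof (intro exI conjI)
  let ?C = "exp (lam / (1-lam)^2)"
  show "(0::real) < 1" by simp
  have "0 \<le> lam / (1-lam)^2" using assms by simp
  thus "(1::real) \<le> ?C" by simp
  show "\<forall>\<^sub>F k in sequentially. 1 * (lam / real d) ^ k \<le> vstar d lam k \<and>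
              vstar d lam k \<le> ?C * (lam / real d) ^ k"
  proof (intro always_eventually allI conjI)
    fix k
    note b = bounds[OF assms, of k]
    show "1 * (lam / real d) ^ k \<le> vstar d lam k" using b by simp
    have lk: "0 \<le> lam^k" using assms by simp
    have "lam * (1 - lam^k) / (1-lam)^2 \<le> lam / (1-lam)^2"
      using assms lk by (intro divide_right_mono) (auto simp: mult_le_cancel_left1)
    hence "exp (lam * (1 - lam^k) / (1-lam)^2) \<le> ?C" by simp
    hence "(lam/real d)^k * exp (lam * (1 - lam^k) / (1-lam)^2) \<le> (lam/real d)^k * ?C"
      using assms by (intro mult_left_mono) auto
    thus "vstar d lam k \<le> ?C * (lam / real d) ^ k" using b by (simp add: mult.commute)
  qed
qed

end
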